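(* Let $T \in \mathscr{B}(\mathscr{H})$ be an analytic left invertible operator with $\operatorname{ind}(T) = -n$ for a positive integer $n$, and let $\Omega_T := \{z \in \mathbb{C}: |z| < \|T^\dagger\|^{-1}\}$. Then $T^* \in B_n(\Omega_T)$.
   Context: For a left invertible $T$, $T^\dagger = (T^*T)^{-1}T^*$ is its Moore–Penrose inverse; $T$ is analytic if $\bigcap_{n\ge1}T^n\mathscr{H} = \{0\}$. For an open $\Omega \subset \mathbb{C}$ and positive integer $n$, the Cowen–Douglas class $B_n(\Omega)$ consists of $R \in \mathscr{B}(\mathscr{H})$ with: $\Omega \subset \sigma(R)$; $(R-\lambda)\mathscr{H} = \mathscr{H}$ for all $\lambda\in\Omega$; $\dim\ker(R-\lambda) = n$ for all $\lambda \in \Omega$; and the closed span of $\bigcup_{\lambda\in\Omega}\ker(R-\lambda)$ is $\mathscr{H}$. *)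

theory Defs
  imports "HOL-Analysis.Analysis"
begin

class complex_vector = real_vector +
  fixes scaleC :: "complex \<Rightarrow> 'a \<Rightarrow> 'a"
  assumes scaleC_add_right: "scaleC a (x + y) = scaleC a x + scaleC a y"
    and scaleC_add_left: "scaleC (a + b) x = scaleC a x + scaleC b x"
    and scaleC_scaleC: "scaleC a (scaleC b x) = scaleC (a * b) x"
    and scaleC_one: "scaleC 1 x = x"
    and scaleR_scaleC: "scaleR r x = scaleC (complex_of_real r) x"

class complex_normed_vector = complex_vector + real_normed_vector +
  assumes norm_scaleC: "norm (scaleC a x) = cmod a * norm x"

text \<open>Inner product, conjugate-linear in the first and linear in the second argument.\<close>
class complex_inner = complex_normed_vector +
  fixes cinner :: "'a \<Rightarrow> 'a \<Rightarrow> complex"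
  assumes cinner_commute: "cinner x y = cnj (cinner y x)"
    and cinner_add_right: "cinner x (y + z) = cinner x y + cinner x z"
    and cinner_scaleC_right: "cinner x (scaleC c y) = c * cinner x y"
    and cinner_self_norm: "cinner x x = complex_of_real ((norm x)\<^sup>2)"

class chilbert_space = complex_inner + complete_space

definition cspan :: "'a::complex_vector set \<Rightarrow> 'a set" where
  "cspan S = module.span scaleC S"

definition cdim :: "'a::complex_vector set \<Rightarrow> nat" where
  "cdim S = vector_space.dim scaleC S"

definition fin_cdim :: "'a::complex_vector set \<Rightarrow> bool" where
  "fin_cdim S \<longleftrightarrow> (\<exists>B. finite B \<and> cspan B = S)"

definition orth :: "'a::complex_inner set \<Rightarrow> 'a set" where
  "orth S = {x. \<forall>y\<in>S. cinner y x = 0}"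

definition kernel :: "('a \<Rightarrow> 'b::zero) \<Rightarrow> 'a set" where
  "kernel T = {x. T x = 0}"

definition bounded_clinear :: "('a::complex_normed_vector \<Rightarrow> 'b::complex_normed_vector) \<Rightarrow> bool" where
  "bounded_clinear f \<longleftrightarrow> bounded_linear f \<and> (\<forall>c x. f (scaleC c x) = scaleC c (f x))"

definition adjoint :: "('a::chilbert_space \<Rightarrow> 'a) \<Rightarrow> ('a \<Rightarrow> 'a)" where
  "adjoint T = (SOME S. \<forall>x y. cinner (T x) y = cinner x (S y))"

definition invertible_op :: "('a::complex_normed_vector \<Rightarrow> 'a) \<Rightarrow> bool" where
  "invertible_op T \<longleftrightarrow> bounded_clinear T \<and>
     (\<exists>S. bounded_clinear S \<and> (\<forall>x. S (T x) = x) \<and> (\<forall>x. T (S x) = x))"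

definition left_invertible :: "('a::complex_normed_vector \<Rightarrow> 'a) \<Rightarrow> bool" where
  "left_invertible T \<longleftrightarrow> bounded_clinear T \<and> (\<exists>S. bounded_clinear S \<and> (\<forall>x. S (T x) = x))"

definition moore_penrose :: "('a::chilbert_space \<Rightarrow> 'a) \<Rightarrow> ('a \<Rightarrow> 'a)" where
  "moore_penrose T = inv (adjoint T \<circ> T) \<circ> adjoint T"

definition analytic_op :: "('a::complex_normed_vector \<Rightarrow> 'a) \<Rightarrow> bool" where
  "analytic_op T \<longleftrightarrow> (\<Inter>k\<in>{1..}. range (T ^^ k)) = {0}"

text \<open>Fredholm operators and their index; the cokernel H / ran T is identified with
  the orthogonal complement of the (closed) range.\<close>
definition fredholm :: "('a::chilbert_space \<Rightarrow> 'a) \<Rightarrow> bool" where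
  "fredholm T \<longleftrightarrow> bounded_clinear T \<and> closed (range T) \<and>
     fin_cdim (kernel T) \<and> fin_cdim (orth (range T))"

definition fredholm_index :: "('a::chilbert_space \<Rightarrow> 'a) \<Rightarrow> int" where
  "fredholm_index T = int (cdim (kernel T)) - int (cdim (orth (range T)))"

definition op_spectrum :: "('a::complex_normed_vector \<Rightarrow> 'a) \<Rightarrow> complex set" where
  "op_spectrum R = {l. \<not> invertible_op (\<lambda>x. R x - scaleC l x)}"

definition cowen_douglas :: "nat \<Rightarrow> complex set \<Rightarrow> ('a::chilbert_space \<Rightarrow> 'a) \<Rightarrow> bool" where
  "cowen_douglas n \<Omega> R \<longleftrightarrow> open \<Omega> \<and> bounded_clinear R \<and>
     \<Omega> \<subseteq> op_spectrum R \<and>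
     (\<forall>l\<in>\<Omega>. surj (\<lambda>x. R x - scaleC l x)) \<and>
     (\<forall>l\<in>\<Omega>. fin_cdim (kernel (\<lambda>x. R x - scaleC l x)) \<and>
              cdim (kernel (\<lambda>x. R x - scaleC l x)) = n) \<and>
     closure (cspan (\<Union>l\<in>\<Omega>. kernel (\<lambda>x. R x - scaleC l x))) = UNIV"

end

theory Submission
  imports Defs
begin


interpretation cv: vector_space "scaleC :: complex \<Rightarrow> 'a::complex_vector \<Rightarrow> 'a"
  by unfold_locales (auto simp: scaleC_add_right scaleC_add_left scaleC_scaleC scaleC_one)

lemma cspan_eq: "cspan = cv.span" by (rule ext) (simp add: cspan_def)
lemma cdim_eq: "cdim = cv.dim" by (rule ext) (simp add: cdim_def)

lemma scaleC_real: "scaleC (complex_of_real r) x = scaleR r x"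
  by (simp add: scaleR_scaleC)

lemma cinner_add_left: "cinner (x + y) z = cinner x z + cinner y z"
  by (metis cinner_commute cinner_add_right complex_cnj_add)

lemma cinner_scaleC_left: "cinner (scaleC c x) y = cnj c * cinner x y"
  by (metis cinner_commute cinner_scaleC_right complex_cnj_mult)

lemma cinner_zero_right[simp]: "cinner x 0 = 0"
  using cinner_add_right[of x 0 0] by simp

lemma cinner_zero_left[simp]: "cinner 0 x = 0"
  using cinner_add_left[of 0 0 x] by simp

lemma cinner_minus_right: "cinner x (- y) = - cinner x y"
  by (metis cinner_add_right cinner_zero_right add.right_inverse minus_unique)

lemma cinner_minus_left: "cinner (- x) y = - cinner x y"
  by (metis cinner_add_left cinner_zero_left add.right_inverse minus_unique)

lemma cinner_diff_right: "cinner x (y - z) = cinner x y - cinner x z"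
  using cinner_add_right[of x y "-z"] by (simp add: cinner_minus_right)

lemma cinner_diff_left: "cinner (x - y) z = cinner x z - cinner y z"
  using cinner_add_left[of x "-y" z] by (simp add: cinner_minus_left)

lemma cinner_self_eq_0: "cinner x x = 0 \<longleftrightarrow> x = 0"
  by (simp add: cinner_self_norm)

lemma cinner_scaleR_left: "cinner (scaleR r x) y = complex_of_real r * cinner x y"
  by (simp add: scaleR_scaleC cinner_scaleC_left)

lemma cinner_scaleR_right: "cinner x (scaleR r y) = complex_of_real r * cinner x y"
  by (simp add: scaleR_scaleC cinner_scaleC_right)

lemma cinner_ext: assumes "\<And>x. cinner x u = cinner x v" shows "u = v"
proof -
  have "cinner (u - v) (u - v) = 0" using assms[of "u - v"] by (simp add: cinner_diff_right)
  thus ?thesis by (simp add: cinner_self_eq_0)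
qed

lemma norm_diff_sq: "(norm (x - y))\<^sup>2 = (norm x)\<^sup>2 - 2 * Re (cinner x y) + (norm y)\<^sup>2"
proof -
  have "complex_of_real ((norm (x - y))\<^sup>2) = cinner (x - y) (x - y)" by (simp add: cinner_self_norm)
  also have "\<dots> = cinner x x - (cinner x y + cnj (cinner x y)) + cinner y y"
    by (simp add: cinner_diff_left cinner_diff_right cinner_commute[of y x])
  also have "\<dots> = complex_of_real ((norm x)\<^sup>2 - 2 * Re (cinner x y) + (norm y)\<^sup>2)"
    by (simp add: cinner_self_norm complex_add_cnj)
  finally show ?thesis by (simp only: of_real_eq_iff)
qed

lemma norm_add_sq: "(norm (x + y))\<^sup>2 = (norm x)\<^sup>2 + 2 * Re (cinner x y) + (norm y)\<^sup>2"
  using norm_diff_sq[of x "-y"] by (simp add: cinner_minus_right)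

lemma Re_cinner_le: "Re (cinner x y) \<le> norm x * norm y"
proof -
  have "0 \<le> (norm (scaleR (norm y) x - scaleR (norm x) y))\<^sup>2" by simp
  also have "\<dots> = (norm (scaleR (norm y) x))\<^sup>2 - 2 * Re (cinner (scaleR (norm y) x) (scaleR (norm x) y)) + (norm (scaleR (norm x) y))\<^sup>2"
    by (rule norm_diff_sq)
  also have "\<dots> = 2 * (norm x)\<^sup>2 * (norm y)\<^sup>2 - 2 * norm x * norm y * Re (cinner x y)"
    by (simp add: cinner_scaleR_left cinner_scaleR_right power2_eq_square algebra_simps)
  finally have "norm x * norm y * Re (cinner x y) \<le> norm x * norm y * (norm x * norm y)"
    by (simp add: power2_eq_square algebra_simps)
  thus ?thesis
    proof (cases "norm x * norm y = 0")
    case True thus ?thesis by auto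
  next
    case False
    hence "norm x * norm y > 0" by simp
    thus ?thesis using \<open>norm x * norm y * Re (cinner x y) \<le> _\<close> mult_le_cancel_left_pos by blast
  qed
qed

lemma cinner_cs: "cmod (cinner x y) \<le> norm x * norm y"
proof (cases "cinner x y = 0")
  case True thus ?thesis by simp
next
  case False
  define a where "a = cinner x y"
  define u where "u = a / complex_of_real (cmod a)"
  have cu: "cmod u = 1" using False by (simp add: u_def a_def norm_divide)
  have "cinner (scaleC u x) y = cnj u * a" by (simp add: cinner_scaleC_left a_def)
  also have "cnj u * a = complex_of_real (cmod a)"
  proof -
    have "cnj u * a = (a * cnj a) / complex_of_real (cmod a)" by (simp add: u_def)
    also have "\<dots> = complex_of_real ((cmod a)\<^sup>2) / complex_of_real (cmod a)"
      by (metis complex_norm_square mult.commute of_real_power)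
    also have "\<dots> = complex_of_real (cmod a)" using False by (simp add: a_def power2_eq_square)
    finally show ?thesis .
  qed
  finally have "cmod a = Re (cinner (scaleC u x) y)" by simp
  also have "\<dots> \<le> norm (scaleC u x) * norm y" by (rule Re_cinner_le)
  also have "\<dots> = norm x * norm y" by (simp add: norm_scaleC cu)
  finally show ?thesis by (simp add: a_def)
qed




lemma bcl_bl: "bounded_clinear T \<Longrightarrow> bounded_linear T" by (simp add: bounded_clinear_def)
lemma bcl_scaleC: "bounded_clinear T \<Longrightarrow> T (scaleC c x) = scaleC c (T x)" by (simp add: bounded_clinear_def)
lemma bcl_add: "bounded_clinear T \<Longrightarrow> T (x + y) = T x + T y"
  by (simp add: bounded_clinear_def linear_simps)
lemma bcl_diff: "bounded_clinear T \<Longrightarrow> T (x - y) = T x - T y"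
  by (simp add: bounded_clinear_def linear_simps)
lemma bcl_zero: "bounded_clinear T \<Longrightarrow> T 0 = 0"
  by (simp add: bounded_clinear_def linear_simps)
lemma bcl_minus: "bounded_clinear T \<Longrightarrow> T (- x) = - T x"
  by (simp add: bounded_clinear_def linear_simps)
lemma bcl_norm: "bounded_clinear T \<Longrightarrow> norm (T x) \<le> onorm T * norm x"
  by (simp add: bounded_clinear_def onorm)
lemma bcl_onorm_nonneg: "bounded_clinear T \<Longrightarrow> 0 \<le> onorm T"
  by (simp add: bounded_clinear_def onorm_pos_le)

lemma bcl_intro:
  assumes "\<And>x y. f (x + y) = f x + f y" "\<And>c x. f (scaleC c x) = scaleC c (f x)"
    "\<And>x. norm (f x) \<le> norm x * K"
  shows "bounded_clinear f"
  unfolding bounded_clinear_def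
proof (intro conjI allI assms(2))
  show "bounded_linear f"
    by (rule bounded_linear_intro[where K=K]) (auto simp: assms scaleR_scaleC)
qed

lemma bcl_compose: "bounded_clinear A \<Longrightarrow> bounded_clinear B \<Longrightarrow> bounded_clinear (A \<circ> B)"
  unfolding bounded_clinear_def comp_def by (auto intro: bounded_linear_compose)

lemma scaleC_bl: "bounded_linear (scaleC c :: 'a::complex_normed_vector \<Rightarrow> 'a)"
  by (rule bounded_linear_intro[where K="cmod c"])
     (auto simp: scaleC_add_right scaleR_scaleC scaleC_scaleC mult.commute norm_scaleC)

lemma csubspace_closure:
  fixes S :: "'a::complex_normed_vector set"
  assumes "cv.subspace S" shows "cv.subspace (closure S)"
  unfolding cv.subspace_def
proof (intro conjI ballI allI)
  show "0 \<in> closure S" using assms cv.subspace_0 closure_subset by blast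
next
  fix x y assume "x \<in> closure S" "y \<in> closure S"
  then obtain f g where f: "\<forall>n. f n \<in> S" "f \<longlonglongrightarrow> x" and g: "\<forall>n. g n \<in> S" "g \<longlonglongrightarrow> y"
    by (meson closure_sequential)
  have "\<forall>n. f n + g n \<in> S" using f g assms cv.subspace_add by blast
  moreover have "(\<lambda>n. f n + g n) \<longlonglongrightarrow> x + y" using f g by (intro tendsto_add) auto
  ultimately show "x + y \<in> closure S" by (meson closure_sequential)
next
  fix c x assume "x \<in> closure S"
  then obtain f where f: "\<forall>n. f n \<in> S" "f \<longlonglongrightarrow> x" by (meson closure_sequential)
  have "\<forall>n. scaleC c (f n) \<in> S" using f assms cv.subspace_scale by blast
  moreover have "(\<lambda>n. scaleC c (f n)) \<longlonglongrightarrow> scaleC c x"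
    using bounded_linear.tendsto[OF scaleC_bl f(2)] .
  ultimately show "scaleC c x \<in> closure S" by (meson closure_sequential)
qed

lemma parallelogram: "(norm (a - b :: 'a::complex_inner))\<^sup>2 + (norm (a + b))\<^sup>2 = 2 * (norm a)\<^sup>2 + 2 * (norm b)\<^sup>2"
  using norm_diff_sq[of a b] norm_add_sq[of a b] by linarith

lemma projection_exists:
  fixes x :: "'a::chilbert_space"
  assumes cl: "closed M" and sub: "cv.subspace M"
  shows "\<exists>m\<in>M. \<forall>v\<in>M. cinner v (x - m) = 0"
proof -
  have M0: "0 \<in> M" using sub cv.subspace_0 by blast
  define D where "D = (\<lambda>m. norm (x - m)) ` M"
  define d where "d = Inf D"
  have Dne: "D \<noteq> {}" using M0 by (auto simp: D_def)
  have bdd: "bdd_below D" unfolding D_def by (rule bdd_belowI[where m=0]) auto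
  have dle: "\<And>m. m \<in> M \<Longrightarrow> d \<le> norm (x - m)"
    unfolding d_def D_def by (rule cInf_lower) (use bdd D_def in auto)
  have d0: "0 \<le> d" unfolding d_def by (rule cInf_greatest[OF Dne]) (auto simp: D_def)
  have "\<forall>k::nat. \<exists>m\<in>M. norm (x - m) < d + inverse (real (Suc k))"
  proof
    fix k :: nat
    have "Inf D < d + inverse (real (Suc k))" by (simp add: d_def)
    from cInf_lessD[OF Dne this] show "\<exists>m\<in>M. norm (x - m) < d + inverse (real (Suc k))"
      by (auto simp: D_def)
  qed
  then obtain s where sM: "\<And>k. s k \<in> M" and sd: "\<And>k. norm (x - s k) < d + inverse (real (Suc k))"
    by metis
  define e where "e k = inverse (real (Suc k))" for k
  have e0: "0 < e k" "e k \<le> 1" for k by (auto simp: e_def inverse_le_1_iff)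
  have key: "(norm (s j - s k))\<^sup>2 \<le> (4 * d + 2) * (e j + e k)" for j k
  proof -
    define a where "a = x - s j"
    define b where "b = x - s k"
    define mid where "mid = scaleC (1/2) (s j + s k)"
    have "mid \<in> M" unfolding mid_def using sub sM cv.subspace_add cv.subspace_scale by blast
    hence "d \<le> norm (x - mid)" by (rule dle)
    have half: "scaleR 2 (scaleC (1/2) y) = y" for y :: 'a
      by (simp add: scaleR_scaleC scaleC_scaleC scaleC_one)
    have ab: "a + b = scaleR 2 (x - mid)"
      unfolding scaleR_diff_right mid_def half by (simp add: a_def b_def scaleR_2)
    have "norm (a + b) = 2 * norm (x - mid)" by (simp add: ab)
    hence nab: "2 * d \<le> norm (a + b)" using \<open>d \<le> norm (x - mid)\<close> by simp
    have "a - b = s k - s j" by (simp add: a_def b_def)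
    hence "norm (s j - s k) = norm (a - b)" by (simp add: norm_minus_commute)
    have "(2 * d)\<^sup>2 \<le> (norm (a + b))\<^sup>2" using nab d0 by (intro power_mono) auto
    have na: "norm a \<le> d + e j" "norm b \<le> d + e k" using sd[of j] sd[of k] by (auto simp: a_def b_def e_def)
    have "(norm a)\<^sup>2 \<le> (d + e j)\<^sup>2" by (rule power_mono[OF na(1)]) simp
    moreover have "(norm b)\<^sup>2 \<le> (d + e k)\<^sup>2" by (rule power_mono[OF na(2)]) simp
    ultimately have "(norm (a - b))\<^sup>2 \<le> 2 * (d + e j)\<^sup>2 + 2 * (d + e k)\<^sup>2 - (2 * d)\<^sup>2"
      using parallelogram[of a b] \<open>(2 * d)\<^sup>2 \<le> (norm (a + b))\<^sup>2\<close> by linarith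
    also have "\<dots> = 4 * d * (e j + e k) + 2 * (e j * e j + e k * e k)"
      by (simp add: power2_eq_square algebra_simps)
    also have "\<dots> \<le> (4 * d + 2) * (e j + e k)"
    proof -
      have "e j * e j \<le> e j" "e k * e k \<le> e k" using e0 by (auto intro: mult_left_le)
      thus ?thesis by (simp add: algebra_simps)
    qed
    finally show ?thesis using \<open>norm (s j - s k) = norm (a - b)\<close> by simp
  qed
  have "Cauchy s"
  proof (rule metric_CauchyI)
    fix r :: real assume "r > 0"
    obtain N :: nat where N: "(4 * d + 2) * 2 / r\<^sup>2 < real N"
      using reals_Archimedean2 by blast
    have Npos: "real N > 0" using N d0 \<open>r > 0\<close>
      by (smt (verit) divide_nonneg_nonneg zero_le_power2 mult_nonneg_nonneg)
    show "\<exists>N. \<forall>m\<ge>N. \<forall>n\<ge>N. dist (s m) (s n) < r"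
    proof (intro exI allI impI)
      fix m n assume mn: "N \<le> m" "N \<le> n"
      have em: "e m \<le> inverse (real N)" "e n \<le> inverse (real N)"
        using mn Npos by (auto simp: e_def intro!: le_imp_inverse_le)
      have "(norm (s m - s n))\<^sup>2 \<le> (4 * d + 2) * (e m + e n)" by (rule key)
      also have "\<dots> \<le> (4 * d + 2) * (2 * inverse (real N))"
        using em d0 by (intro mult_left_mono) auto
      also have "\<dots> < r\<^sup>2"
      proof -
        have "(4 * d + 2) * 2 < r\<^sup>2 * real N" using N \<open>r > 0\<close> by (simp add: field_simps)
        thus ?thesis using Npos by (simp add: field_simps)
      qed
      finally have "(norm (s m - s n))\<^sup>2 < r\<^sup>2" .
      hence "norm (s m - s n) < r" using \<open>r > 0\<close> by (smt (verit) power_mono norm_ge_zero)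
      thus "dist (s m) (s n) < r" by (simp add: dist_norm)
    qed
  qed
  then obtain m where lim: "s \<longlonglongrightarrow> m" using Cauchy_convergent convergent_def by blast
  have mM: "m \<in> M" using closed_sequentially[OF cl] sM lim by blast
  have "norm (x - m) \<le> d"
  proof (rule LIMSEQ_le)
    show "(\<lambda>k. norm (x - s k)) \<longlonglongrightarrow> norm (x - m)" by (intro tendsto_intros lim)
    show "(\<lambda>k. d + inverse (real (Suc k))) \<longlonglongrightarrow> d"
      using tendsto_add[OF tendsto_const LIMSEQ_inverse_real_of_nat, of d] by simp
    show "\<exists>N. \<forall>n\<ge>N. norm (x - s n) \<le> d + inverse (real (Suc n))" using sd less_imp_le by blast
  qed
  have orth: "cinner v (x - m) = 0" if vM: "v \<in> M" for v
  proof (rule ccontr)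
    assume a0: "cinner v (x - m) \<noteq> 0"
    define a where "a = cinner v (x - m)"
    define r where "r = x - m"
    define s' where "s' = inverse ((norm v)\<^sup>2 + 1)"
    define t where "t = complex_of_real s' * a"
    have s'pos: "s' > 0" unfolding s'_def by (intro positive_imp_inverse_positive add_nonneg_pos) auto
    have s'v: "s' * (norm v)\<^sup>2 < 1"
    proof -
      have p: "0 < (norm v)\<^sup>2 + 1" by (intro add_nonneg_pos) auto
      have "(norm v)\<^sup>2 < (norm v)\<^sup>2 + 1" by simp
      thus ?thesis unfolding s'_def using p by (simp add: divide_less_eq field_simps)
    qed
    have "m + scaleC t v \<in> M" using mM vM sub cv.subspace_add cv.subspace_scale by blast
    hence "d \<le> norm (r - scaleC t v)" using dle[of "m + scaleC t v"] by (simp add: r_def algebra_simps)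
    hence "norm r \<le> norm (r - scaleC t v)" using \<open>norm (x - m) \<le> d\<close> by (simp add: r_def)
    hence "(norm r)\<^sup>2 \<le> (norm (r - scaleC t v))\<^sup>2" by (intro power_mono) auto
    also have "\<dots> = (norm r)\<^sup>2 - 2 * Re (cinner r (scaleC t v)) + (norm (scaleC t v))\<^sup>2"
      by (rule norm_diff_sq)
    also have "cinner r (scaleC t v) = complex_of_real (s' * (cmod a)\<^sup>2)"
    proof -
      have "cinner r v = cnj a" by (simp add: a_def r_def cinner_commute[of v])
      hence "cinner r (scaleC t v) = complex_of_real s' * (a * cnj a)"
        by (simp add: cinner_scaleC_right t_def)
      also have "a * cnj a = complex_of_real ((cmod a)\<^sup>2)" by (metis complex_norm_square of_real_power)
      finally show ?thesis by simp
    qed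
    also have "norm (scaleC t v) = s' * cmod a * norm v"
      using s'pos by (simp add: norm_scaleC t_def norm_mult)
    finally have "0 \<le> (cmod a)\<^sup>2 * s' * (s' * (norm v)\<^sup>2 - 2)"
      by (simp add: power2_eq_square algebra_simps)
    moreover have "(cmod a)\<^sup>2 * s' > 0" using a0 s'pos by (simp add: a_def)
    moreover have "s' * (norm v)\<^sup>2 - 2 < 0" using s'v by simp
    ultimately show False by (simp add: mult_less_0_iff zero_le_mult_iff)
  qed
  show ?thesis using mM orth by blast
qed



lemma riesz:
  fixes f :: "'a::chilbert_space \<Rightarrow> complex"
  assumes add: "\<And>x y. f (x + y) = f x + f y" and sc: "\<And>c x. f (scaleC c x) = c * f x"
    and bd: "\<And>x. cmod (f x) \<le> K * norm x"
  shows "\<exists>y. \<forall>x. f x = cinner y x"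
proof -
  have bl: "bounded_linear f"
    by (rule bounded_linear_intro[where K=K])
       (auto simp: add scaleR_scaleC sc scaleR_conv_of_real bd mult.commute)
  have f0: "f 0 = 0" using sc[of 0 0] by simp
  have fdiff: "f (x - y) = f x - f y" for x y
    using add[of "x - y" y] by simp
  define N where "N = {x. f x = 0}"
  have clN: "closed N" unfolding N_def
    by (rule closed_Collect_eq) (auto intro: linear_continuous_on bl)
  have subN: "cv.subspace N" unfolding N_def cv.subspace_def by (auto simp: f0 add sc)
  show ?thesis
  proof (cases "\<forall>x. f x = 0")
    case True thus ?thesis by (intro exI[of _ 0]) simp
  next
    case False
    then obtain x0 where fx0: "f x0 \<noteq> 0" by blast
    obtain m where mN: "m \<in> N" and orth: "\<forall>v\<in>N. cinner v (x0 - m) = 0"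
      using projection_exists[OF clN subN, of x0] by blast
    define z where "z = x0 - m"
    have fz: "f z \<noteq> 0" using fx0 mN by (simp add: z_def fdiff N_def)
    have z0: "z \<noteq> 0" using fz f0 by auto
    have nz: "norm z \<noteq> 0" using z0 by simp
    define y where "y = scaleC (cnj (f z) / complex_of_real ((norm z)\<^sup>2)) z"
    have "f x = cinner y x" for x
    proof -
      define w where "w = x - scaleC (f x / f z) z"
      have "f w = 0" using fz by (simp add: w_def fdiff sc)
      hence "cinner w z = 0" using orth by (simp add: N_def z_def)
      hence "cinner z w = 0" by (metis cinner_commute complex_cnj_zero)
      hence czx: "cinner z x = (f x / f z) * complex_of_real ((norm z)\<^sup>2)"
        by (simp add: w_def cinner_diff_right cinner_scaleC_right cinner_self_norm)
      have "cinner y x = (f z / complex_of_real ((norm z)\<^sup>2)) * cinner z x"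
        by (simp add: y_def cinner_scaleC_left)
      also have "\<dots> = f x" using fz nz by (simp add: czx)
      finally show ?thesis by simp
    qed
    thus ?thesis by blast
  qed
qed

lemma adjoint_exists:
  fixes T :: "'a::chilbert_space \<Rightarrow> 'a"
  assumes "bounded_clinear T"
  shows "\<exists>S. \<forall>x y. cinner (T x) y = cinner x (S y)"
proof -
  have "\<forall>y. \<exists>w. \<forall>x. cinner (T x) y = cinner x w"
  proof
    fix y
    have "\<exists>w. \<forall>x. cinner y (T x) = cinner w x"
    proof (rule riesz[where K="norm y * onorm T"])
      show "cinner y (T (x + x')) = cinner y (T x) + cinner y (T x')" for x x'
        by (simp add: bcl_add[OF assms] cinner_add_right)
      show "cinner y (T (scaleC c x)) = c * cinner y (T x)" for c x
        by (simp add: bcl_scaleC[OF assms] cinner_scaleC_right)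
      show "cmod (cinner y (T x)) \<le> norm y * onorm T * norm x" for x
      proof -
        have "cmod (cinner y (T x)) \<le> norm y * norm (T x)" by (rule cinner_cs)
        also have "\<dots> \<le> norm y * (onorm T * norm x)"
          by (intro mult_left_mono bcl_norm[OF assms]) auto
        finally show ?thesis by (simp add: mult.assoc)
      qed
    qed
    then obtain w where "\<forall>x. cinner y (T x) = cinner w x" by blast
    hence "\<forall>x. cinner (T x) y = cinner x w" by (metis cinner_commute)
    thus "\<exists>w. \<forall>x. cinner (T x) y = cinner x w" by blast
  qed
  thus ?thesis by metis
qed

lemma adj1:
  assumes "bounded_clinear T"
  shows "cinner (T x) y = cinner x (adjoint T y)"
proof -
  have "\<forall>x y. cinner (T x) y = cinner x (adjoint T y)"
    unfolding adjoint_def using someI_ex[OF adjoint_exists[OF assms]] .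
  thus ?thesis by blast
qed

lemma adj2:
  assumes "bounded_clinear T"
  shows "cinner (adjoint T y) x = cinner y (T x)"
  by (metis adj1[OF assms] cinner_commute)

lemma adjoint_bcl:
  fixes T :: "'a::chilbert_space \<Rightarrow> 'a"
  assumes T: "bounded_clinear T"
  shows "bounded_clinear (adjoint T)" and "norm (adjoint T y) \<le> onorm T * norm y"
proof -
  let ?A = "adjoint T"
  have nb: "norm (?A y) \<le> onorm T * norm y" for y
  proof -
    have "(norm (?A y))\<^sup>2 = cmod (cinner (?A y) (?A y))"
      by (simp only: cinner_self_norm norm_of_real abs_of_nonneg zero_le_power2)
    also have "\<dots> = cmod (cinner y (T (?A y)))" by (simp add: adj2[OF T])
    also have "\<dots> \<le> norm y * norm (T (?A y))" by (rule cinner_cs)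
    also have "\<dots> \<le> norm y * (onorm T * norm (?A y))"
      by (intro mult_left_mono bcl_norm[OF T]) auto
    finally have h: "norm (?A y) * norm (?A y) \<le> (onorm T * norm y) * norm (?A y)"
      by (simp add: power2_eq_square algebra_simps)
    show ?thesis
    proof (cases "norm (?A y) = 0")
      case True thus ?thesis using bcl_onorm_nonneg[OF T] by simp
    next
      case False thus ?thesis using h by (simp add: mult_le_cancel_right)
    qed
  qed
  show "norm (?A y) \<le> onorm T * norm y" by (rule nb)
  show "bounded_clinear ?A"
  proof (rule bcl_intro[where K="onorm T"])
    show "?A (x + y) = ?A x + ?A y" for x y
      by (rule cinner_ext) (simp add: adj1[OF T, symmetric] cinner_add_right)
    show "?A (scaleC c x) = scaleC c (?A x)" for c x
      by (rule cinner_ext) (simp add: adj1[OF T, symmetric] cinner_scaleC_right)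
    show "norm (?A x) \<le> norm x * onorm T" for x using nb[of x] by (simp add: mult.commute)
  qed
qed



lemma cdim_zero: "cdim {0::'a::complex_vector} = 0"
proof -
  have "cv.span {} = cv.span {0::'a}" using cv.span_empty cv.span_zero cv.span_minimal[of "{0::'a}" "{0}"]
    by (metis cv.subspace_span cv.span_superset empty_subsetI insert_subset subset_antisym)
  hence "cv.dim {0::'a} = card ({}::'a set)" using cv.independent_empty by (rule cv.dim_eq_card)
  thus ?thesis by (simp add: cdim_eq)
qed

lemma cmod_of_real_sq[simp]: "cmod ((complex_of_real r)\<^sup>2) = r\<^sup>2"
  by (simp add: norm_power)

lemma kernel_csubspace:
  assumes "bounded_clinear R" shows "cv.subspace (kernel R)"
  unfolding cv.subspace_def kernel_def using assms
  by (auto simp: bcl_zero bcl_add bcl_scaleC)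

context
  fixes T :: "'a::chilbert_space \<Rightarrow> 'a" and n :: nat
  assumes npos: "n > 0"
    and Tb: "bounded_clinear T"
    and Tli: "left_invertible T"
    and Tan: "analytic_op T"
    and Tfr: "fredholm T"
    and Tind: "fredholm_index T = - int n"
begin

abbreviation "Ts \<equiv> adjoint T"

lemma Ts_bcl: "bounded_clinear Ts" using adjoint_bcl(1)[OF Tb] .

lemma TTs: "cinner (T x) y = cinner x (Ts y)" using adj1[OF Tb] .

lemma S_ex: obtains S where "bounded_clinear S" "\<And>x. S (T x) = x"
  using Tli unfolding left_invertible_def by blast

definition "cS = onorm (SOME S. bounded_clinear S \<and> (\<forall>x. S (T x) = x))"

definition "Sop = (SOME S. bounded_clinear S \<and> (\<forall>x. S (T x) = x))"

lemma Sop: "bounded_clinear Sop \<and> (\<forall>x. Sop (T x) = x)"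
proof -
  have "\<exists>S. bounded_clinear S \<and> (\<forall>x. S (T x) = x)" using Tli unfolding left_invertible_def by blast
  thus ?thesis unfolding Sop_def by (rule someI_ex)
qed

lemma below: "norm x \<le> cS * norm (T x)"
proof -
  have "norm (Sop (T x)) \<le> onorm Sop * norm (T x)" using Sop by (intro bcl_norm) blast
  moreover have "Sop (T x) = x" using Sop by blast
  ultimately show ?thesis by (simp add: cS_def Sop_def[symmetric])
qed

lemma cS_nonneg: "0 \<le> cS"
  unfolding cS_def Sop_def[symmetric] using Sop bcl_onorm_nonneg by blast

lemma T_inj: "T x = 0 \<Longrightarrow> x = 0"
  using below[of x] by simp

lemma orth_range: "orth (range T) = kernel Ts"
proof -
  have "y \<in> orth (range T) \<longleftrightarrow> Ts y = 0" for y
  proof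
    assume "y \<in> orth (range T)"
    hence "\<forall>x. cinner x (Ts y) = cinner x 0" by (auto simp: orth_def TTs[symmetric])
    thus "Ts y = 0" by (intro cinner_ext) auto
  next
    assume "Ts y = 0" thus "y \<in> orth (range T)" by (auto simp: orth_def TTs)
  qed
  thus ?thesis by (auto simp: kernel_def)
qed

lemma kerT: "kernel T = {0}"
  using T_inj bcl_zero[OF Tb] by (auto simp: kernel_def)

lemma dim_kerTs: "cdim (kernel Ts) = n" and fin_kerTs: "fin_cdim (kernel Ts)"
proof -
  show "cdim (kernel Ts) = n" using Tind by (simp add: fredholm_index_def kerT orth_range cdim_zero)
  show "fin_cdim (kernel Ts)" using Tfr orth_range by (simp add: fredholm_def)
qed

definition "A = Ts \<circ> T"

lemma A_bcl: "bounded_clinear A" unfolding A_def by (rule bcl_compose[OF Ts_bcl Tb])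

lemma A_below: "norm x \<le> cS\<^sup>2 * norm (A x)"
proof -
  have h1: "(norm x)\<^sup>2 \<le> cS\<^sup>2 * (norm (T x))\<^sup>2"
    using below[of x] power_mono[of "norm x" "cS * norm (T x)" 2] by (simp add: power_mult_distrib)
  have "cinner x (A x) = complex_of_real ((norm (T x))\<^sup>2)"
    by (simp add: A_def TTs[symmetric] cinner_self_norm)
  hence "(norm (T x))\<^sup>2 = cmod (cinner x (A x))" by simp
  also have "\<dots> \<le> norm x * norm (A x)" by (rule cinner_cs)
  finally have h2: "(norm (T x))\<^sup>2 \<le> norm x * norm (A x)" .
  have "cS\<^sup>2 * (norm (T x))\<^sup>2 \<le> cS\<^sup>2 * (norm x * norm (A x))"
    using h2 by (intro mult_left_mono) auto
  with h1 have h: "norm x * norm x \<le> (cS\<^sup>2 * norm (A x)) * norm x"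
    by (simp add: power2_eq_square algebra_simps)
  show ?thesis
  proof (cases "norm x = 0")
    case True thus ?thesis using cS_nonneg by simp
  next
    case False thus ?thesis using h by (simp add: mult_le_cancel_right)
  qed
qed

lemma A_inj: "inj A"
proof (rule injI)
  fix x y assume "A x = A y"
  hence "A (x - y) = 0" using bcl_diff[OF A_bcl] by simp
  hence "norm (x - y) \<le> 0" using A_below[of "x - y"] by simp
  thus "x = y" by simp
qed

lemma Ts_surj_aux: "\<exists>w. Ts w = y"
proof -
  obtain S where Sb: "bounded_clinear S" and ST: "\<And>x. S (T x) = x" using S_ex by blast
  have "Ts (adjoint S y) = y"
  proof (rule cinner_ext)
    fix x show "cinner x (Ts (adjoint S y)) = cinner x y"
      by (simp add: TTs[symmetric] adj1[OF Sb, symmetric] ST)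
  qed
  thus ?thesis by blast
qed

lemma A_surj: "surj A"
proof -
  have "\<exists>u. A u = y" for y
  proof -
    obtain w where w: "Ts w = y" using Ts_surj_aux by blast
    have cl: "closed (range T)" using Tfr by (simp add: fredholm_def)
    have sub: "cv.subspace (range T)" unfolding cv.subspace_def
    proof (intro conjI ballI allI)
      show "0 \<in> range T" using bcl_zero[OF Tb] rangeI[of T 0] by simp
      show "x + y \<in> range T" if "x \<in> range T" "y \<in> range T" for x y
        using that by (auto simp: bcl_add[OF Tb, symmetric])
      show "scaleC c x \<in> range T" if "x \<in> range T" for c x
        using that by (auto simp: bcl_scaleC[OF Tb, symmetric])
    qed
    obtain m where m: "m \<in> range T" "\<forall>v\<in>range T. cinner v (w - m) = 0"
      using projection_exists[OF cl sub, of w] by blast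
    then obtain u where u: "m = T u" by blast
    have "Ts (w - m) = 0"
    proof (rule cinner_ext)
      fix x show "cinner x (Ts (w - m)) = cinner x 0" using m by (simp add: TTs[symmetric])
    qed
    hence "A u = y" using w by (simp add: A_def u bcl_diff[OF Ts_bcl])
    thus ?thesis by blast
  qed
  thus ?thesis by (metis surjI)
qed

definition "Ai = inv A"

lemma A_Ai: "A (Ai y) = y" unfolding Ai_def using A_surj by (simp add: surj_f_inv_f)
lemma Ai_A: "Ai (A x) = x" unfolding Ai_def using A_inj by simp

lemma Ai_bcl: "bounded_clinear Ai"
proof (rule bcl_intro[where K="cS\<^sup>2"])
  show "Ai (x + y) = Ai x + Ai y" for x y
    by (metis A_Ai Ai_A bcl_add[OF A_bcl])
  show "Ai (scaleC c x) = scaleC c (Ai x)" for c x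
    by (metis A_Ai Ai_A bcl_scaleC[OF A_bcl])
  show "norm (Ai x) \<le> norm x * cS\<^sup>2" for x
    using A_below[of "Ai x"] by (simp add: A_Ai mult.commute)
qed

abbreviation "L \<equiv> moore_penrose T"

lemma L_eq: "L = Ai \<circ> Ts" unfolding moore_penrose_def Ai_def A_def ..

lemma L_bcl: "bounded_clinear L" unfolding L_eq by (rule bcl_compose[OF Ai_bcl Ts_bcl])

lemma LT: "L (T x) = x" unfolding L_eq using Ai_A by (simp add: A_def)

lemma TL_proj: "Ts (z - T (L z)) = 0"
  unfolding L_eq using A_Ai by (simp add: bcl_diff[OF Ts_bcl] A_def)

lemma kerTs_nonzero: "\<exists>e. e \<noteq> 0 \<and> Ts e = 0"
proof (rule ccontr)
  assume "\<not> ?thesis"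
  hence "kernel Ts = {0}" using bcl_zero[OF Ts_bcl] by (auto simp: kernel_def)
  hence "cdim (kernel Ts) = 0" by (simp add: cdim_zero)
  thus False using dim_kerTs npos by simp
qed

definition "\<rho> = onorm L"

lemma rho_pos: "\<rho> > 0"
proof -
  obtain e where e: "e \<noteq> 0" "Ts e = 0" using kerTs_nonzero by blast
  hence "L (T e) \<noteq> 0" by (simp add: LT)
  hence "\<not> (\<forall>x. L x = 0)" by blast
  thus ?thesis unfolding \<rho>_def by (simp add: onorm_pos_lt[OF bcl_bl[OF L_bcl]])
qed

abbreviation "Ls \<equiv> adjoint L"

lemma Ls_bcl: "bounded_clinear Ls" using adjoint_bcl(1)[OF L_bcl] .
lemma Ls_norm: "norm (Ls y) \<le> \<rho> * norm y" using adjoint_bcl(2)[OF L_bcl] by (simp add: \<rho>_def)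
lemma LLs: "cinner (L x) y = cinner x (Ls y)" using adj1[OF L_bcl] .

lemma Ts_Ls: "Ts (Ls y) = y"
proof (rule cinner_ext)
  fix x show "cinner x (Ts (Ls y)) = cinner x y" by (simp add: TTs[symmetric] LLs[symmetric] LT)
qed

definition "Bm \<mu> y = y - scaleC \<mu> (Ls y)"

abbreviation "K \<mu> \<equiv> kernel (\<lambda>x. Ts x - scaleC \<mu> x)"

lemma Bm_add: "Bm \<mu> (x + y) = Bm \<mu> x + Bm \<mu> y"
  by (simp add: Bm_def bcl_add[OF Ls_bcl] scaleC_add_right algebra_simps)

lemma Bm_scaleC: "Bm \<mu> (scaleC c x) = scaleC c (Bm \<mu> x)"
  by (simp add: Bm_def bcl_scaleC[OF Ls_bcl] scaleC_scaleC mult.commute cv.scale_right_diff_distrib)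

lemma R_bcl: "bounded_clinear (\<lambda>x. Ts x - scaleC \<mu> x)"
proof (rule bcl_intro[where K="onorm Ts + cmod \<mu>"])
  show "Ts (x + y) - scaleC \<mu> (x + y) = (Ts x - scaleC \<mu> x) + (Ts y - scaleC \<mu> y)" for x y
    by (simp add: bcl_add[OF Ts_bcl] scaleC_add_right algebra_simps)
  show "Ts (scaleC c x) - scaleC \<mu> (scaleC c x) = scaleC c (Ts x - scaleC \<mu> x)" for c x
    by (simp add: bcl_scaleC[OF Ts_bcl] scaleC_scaleC mult.commute cv.scale_right_diff_distrib)
  show "norm (Ts x - scaleC \<mu> x) \<le> norm x * (onorm Ts + cmod \<mu>)" for x
  proof -
    have "norm (Ts x - scaleC \<mu> x) \<le> norm (Ts x) + norm (scaleC \<mu> x)" by (rule norm_triangle_ineq4)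
    also have "\<dots> \<le> onorm Ts * norm x + cmod \<mu> * norm x"
      using bcl_norm[OF Ts_bcl, of x] by (simp add: norm_scaleC)
    finally show ?thesis by (simp add: algebra_simps)
  qed
qed

lemma Ts_Bm: "Ts (Bm \<mu> y) = Ts y - scaleC \<mu> y"
  by (simp add: Bm_def bcl_diff[OF Ts_bcl] bcl_scaleC[OF Ts_bcl] Ts_Ls)

lemma Bm_below:
  assumes "cmod \<mu> * \<rho> < 1"
  shows "(1 - cmod \<mu> * \<rho>) * norm y \<le> norm (Bm \<mu> y)"
proof -
  have "y = Bm \<mu> y + scaleC \<mu> (Ls y)" by (simp add: Bm_def)
  hence "norm y \<le> norm (Bm \<mu> y) + norm (scaleC \<mu> (Ls y))" by (metis norm_triangle_ineq)
  also have "norm (scaleC \<mu> (Ls y)) \<le> cmod \<mu> * (\<rho> * norm y)"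
    by (simp add: norm_scaleC mult_left_mono Ls_norm)
  finally show ?thesis by (simp add: algebra_simps)
qed

lemma Bm_inj:
  assumes "cmod \<mu> * \<rho> < 1"
  shows "inj (Bm \<mu>)"
proof (rule injI)
  fix x y assume "Bm \<mu> x = Bm \<mu> y"
  hence "Bm \<mu> (x - y) = 0" by (simp add: Bm_def bcl_diff[OF Ls_bcl] algebra_simps cv.scale_right_diff_distrib)
  hence "(1 - cmod \<mu> * \<rho>) * norm (x - y) \<le> 0" using Bm_below[OF assms, of "x - y"] by simp
  hence "norm (x - y) \<le> 0" using assms by (simp add: mult_le_0_iff)
  thus "x = y" by simp
qed

lemma Bm_surj:
  assumes "cmod \<mu> * \<rho> < 1"
  shows "\<exists>y. Bm \<mu> y = e"
proof -
  define f where "f y = e + scaleC \<mu> (Ls y)" for y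
  have "\<exists>!y. f y = y"
  proof (rule banach_fix_type[where c="cmod \<mu> * \<rho>"])
    show "0 \<le> cmod \<mu> * \<rho>" using rho_pos by simp
    show "cmod \<mu> * \<rho> < 1" by (rule assms)
    show "\<forall>x y. dist (f x) (f y) \<le> cmod \<mu> * \<rho> * dist x y"
    proof (intro allI)
      fix x y
      have "f x - f y = scaleC \<mu> (Ls (x - y))"
        by (simp add: f_def bcl_diff[OF Ls_bcl] cv.scale_right_diff_distrib)
      hence "dist (f x) (f y) = cmod \<mu> * norm (Ls (x - y))" by (simp add: dist_norm norm_scaleC)
      also have "\<dots> \<le> cmod \<mu> * (\<rho> * norm (x - y))" by (simp add: mult_left_mono Ls_norm)
      finally show "dist (f x) (f y) \<le> cmod \<mu> * \<rho> * dist x y" by (simp add: dist_norm mult.assoc)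
    qed
  qed
  then obtain y where "f y = y" by blast
  hence "Bm \<mu> y = e" by (simp add: f_def Bm_def algebra_simps)
  thus ?thesis by blast
qed

lemma K0: "K 0 = kernel Ts" by (simp add: cv.scale_zero_left)

lemma Bm_K:
  assumes "cmod \<mu> * \<rho> < 1"
  shows "Bm \<mu> ` K \<mu> = kernel Ts"
proof
  show "Bm \<mu> ` K \<mu> \<subseteq> kernel Ts" by (auto simp: kernel_def Ts_Bm)
  show "kernel Ts \<subseteq> Bm \<mu> ` K \<mu>"
  proof
    fix e assume e: "e \<in> kernel Ts"
    obtain y where y: "Bm \<mu> y = e" using Bm_surj[OF assms] by blast
    have "Ts y - scaleC \<mu> y = 0" using e by (simp add: kernel_def Ts_Bm[symmetric] y)
    thus "e \<in> Bm \<mu> ` K \<mu>" using y by (auto simp: kernel_def)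
  qed
qed

lemma dimK:
  assumes m: "cmod \<mu> * \<rho> < 1"
  shows "cdim (K \<mu>) = n \<and> fin_cdim (K \<mu>)"
proof -
  interpret h: module_hom "scaleC :: complex \<Rightarrow> 'a \<Rightarrow> 'a" scaleC "Bm \<mu>"
    by unfold_locales (simp_all add: Bm_add Bm_scaleC)
  have inj: "inj (Bm \<mu>)" by (rule Bm_inj[OF m])
  obtain B where B: "B \<subseteq> K \<mu>" "cv.independent B" "K \<mu> \<subseteq> cv.span B" "card B = cv.dim (K \<mu>)"
    using cv.basis_exists by blast
  have BK: "Bm \<mu> ` B \<subseteq> kernel Ts" using B(1) Bm_K[OF m] by blast
  have indep: "cv.independent (Bm \<mu> ` B)"
    using h.independent_injective_image[OF B(2)] inj inj_on_subset by blast
  have "kernel Ts \<subseteq> cv.span (Bm \<mu> ` B)"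
    using Bm_K[OF m] B(3) h.span_image by blast
  hence "card (Bm \<mu> ` B) = cv.dim (kernel Ts)"
    using cv.basis_card_eq_dim[OF BK _ indep] by blast
  moreover have "card (Bm \<mu> ` B) = card B" using inj by (simp add: card_image inj_on_subset)
  ultimately have dimeq: "cdim (K \<mu>) = n" using B(4) dim_kerTs by (simp add: cdim_eq)
  obtain F where F: "finite F" "cspan F = kernel Ts" using fin_kerTs by (auto simp: fin_cdim_def)
  have "finite (Bm \<mu> ` B)"
    using cv.independent_span_bound[OF F(1) indep] BK F(2) by (simp add: cspan_eq)
  hence finB: "finite B" using inj by (simp add: finite_image_iff inj_on_subset)
  have "cv.span B = K \<mu>"
    by (rule cv.span_subspace[OF B(1) B(3) kernel_csubspace[OF R_bcl]])
  hence "fin_cdim (K \<mu>)" using finB by (auto simp: fin_cdim_def cspan_eq)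
  thus ?thesis using dimeq by blast
qed

lemma surjR:
  assumes m: "cmod \<mu> * \<rho> < 1"
  shows "surj (\<lambda>x. Ts x - scaleC \<mu> x)"
proof -
  have "\<exists>y. Ts y - scaleC \<mu> y = z" for z
  proof -
    obtain y where "Bm \<mu> y = Ls z" using Bm_surj[OF m] by blast
    hence "Ts y - scaleC \<mu> y = z" by (metis Ts_Bm Ts_Ls)
    thus ?thesis by blast
  qed
  thus ?thesis by (metis surjI)
qed

lemma small_le_zero:
  fixes a C d :: real
  assumes d: "d > 0" and C: "C \<ge> 0" and h: "\<And>t. 0 < t \<Longrightarrow> t \<le> d \<Longrightarrow> a \<le> t * C"
  shows "a \<le> 0"
proof (rule ccontr)
  assume "\<not> a \<le> 0"
  hence a: "a > 0" by simp
  define t where "t = min d (a / (C + 1))"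
  have t0: "0 < t" using a d C by (simp add: t_def)
  have "a \<le> t * C" using h[OF t0] by (simp add: t_def)
  also have "t * C \<le> a / (C + 1) * C" using C by (intro mult_right_mono) (auto simp: t_def)
  also have "\<dots> < a" using a C by (simp add: field_simps)
  finally show False by simp
qed

definition "Pp z \<longleftrightarrow> (\<forall>\<mu>. cmod \<mu> * \<rho> < 1 \<longrightarrow> (\<forall>w\<in>K \<mu>. cinner w z = 0))"

lemma Ls_L: "cinner (Ls w) z = cinner w (L z)"
  by (metis LLs cinner_commute)

lemma step_nonzero:
  assumes P: "Pp z" and m: "cmod \<mu> * \<rho> < 1" and w: "w \<in> K \<mu>" and mu0: "\<mu> \<noteq> 0"
  shows "cinner w (L z) = 0"
proof -
  define e where "e = Bm \<mu> w"
  have eK: "e \<in> K 0" using Bm_K[OF m] w K0 by (auto simp: e_def)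
  have m0: "cmod 0 * \<rho> < 1" by simp
  have "w = e + scaleC \<mu> (Ls w)" by (simp add: e_def Bm_def)
  hence "cinner w z = cinner e z + cnj \<mu> * cinner w (L z)"
    by (metis cinner_add_left cinner_scaleC_left Ls_L)
  moreover have "cinner w z = 0" using P m w by (simp add: Pp_def)
  moreover have "cinner e z = 0" using P m0 eK unfolding Pp_def by blast
  ultimately show ?thesis using mu0 by simp
qed

lemma step_zero:
  assumes P: "Pp z" and w: "w \<in> kernel Ts"
  shows "cinner w (L z) = 0"
proof -
  define d where "d = inverse (2 * \<rho>)"
  have d0: "d > 0" using rho_pos by (simp add: d_def)
  have "cmod (cinner w (L z)) \<le> 0"
  proof (rule small_le_zero[OF d0, where C="2 * \<rho> * norm w * norm (L z)"])
    show "0 \<le> 2 * \<rho> * norm w * norm (L z)" using rho_pos by simp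
    fix t :: real assume t: "0 < t" "t \<le> d"
    define \<mu> where "\<mu> = complex_of_real t"
    have tr: "t * \<rho> \<le> 1/2" using t rho_pos by (simp add: d_def field_simps)
    have m: "cmod \<mu> * \<rho> < 1" using tr t by (simp add: \<mu>_def)
    obtain y where y: "Bm \<mu> y = w" using Bm_surj[OF m] by blast
    have yK: "y \<in> K \<mu>"
    proof -
      have "Ts y - scaleC \<mu> y = 0" using w by (simp add: kernel_def Ts_Bm[symmetric] y)
      thus ?thesis by (simp add: kernel_def)
    qed
    have c0: "cinner y (L z) = 0" using step_nonzero[OF P m yK] t by (simp add: \<mu>_def)
    have "w = y - scaleC \<mu> (Ls y)" using y by (simp add: Bm_def)
    hence "cinner w (L z) = - (complex_of_real t * cinner (Ls y) (L z))"
      by (simp add: cinner_diff_left cinner_scaleC_left c0 \<mu>_def)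
    hence "cmod (cinner w (L z)) = t * cmod (cinner (Ls y) (L z))"
      using t by (simp add: norm_mult)
    also have "\<dots> \<le> t * (norm (Ls y) * norm (L z))"
      using t by (intro mult_left_mono cinner_cs) auto
    also have "\<dots> \<le> t * ((\<rho> * norm y) * norm (L z))"
      using t by (intro mult_left_mono mult_right_mono Ls_norm) auto
    also have "norm y \<le> 2 * norm w"
    proof -
      have "(1 - cmod \<mu> * \<rho>) * norm y \<le> norm w" using Bm_below[OF m, of y] y by simp
      moreover have "1/2 \<le> 1 - cmod \<mu> * \<rho>" using tr t by (simp add: \<mu>_def)
      ultimately have "1/2 * norm y \<le> norm w"
        by (meson mult_right_mono norm_ge_zero order_trans)
      thus ?thesis by simp
    qed
    hence "t * ((\<rho> * norm y) * norm (L z)) \<le> t * ((\<rho> * (2 * norm w)) * norm (L z))"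
      using t rho_pos by (intro mult_left_mono mult_right_mono) auto
    finally show "cmod (cinner w (L z)) \<le> t * (2 * \<rho> * norm w * norm (L z))"
      by (simp add: algebra_simps)
  qed
  thus ?thesis by simp
qed

lemma Pp_L: "Pp z \<Longrightarrow> Pp (L z)"
  unfolding Pp_def[of "L z"]
proof (intro allI impI ballI)
  fix \<mu> w assume P: "Pp z" and m: "cmod \<mu> * \<rho> < 1" and w: "w \<in> K \<mu>"
  show "cinner w (L z) = 0"
  proof (cases "\<mu> = 0")
    case True thus ?thesis using step_zero[OF P] w K0 by simp
  next
    case False thus ?thesis using step_nonzero[OF P m w] by simp
  qed
qed

lemma Pp_fix: assumes "Pp z" shows "z = T (L z)"
proof -
  define d where "d = z - T (L z)"
  have dk: "Ts d = 0" using TL_proj by (simp add: d_def)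
  have "\<forall>w\<in>K 0. cinner w z = 0" using assms unfolding Pp_def
    by (metis mult_zero_left norm_zero zero_less_one)
  hence "cinner d z = 0" using dk K0 by (auto simp: kernel_def)
  moreover have "cinner d (T (L z)) = 0"
    by (metis TTs dk cinner_commute cinner_zero_right complex_cnj_zero)
  ultimately have "cinner d d = 0" by (simp add: d_def cinner_diff_right)
  thus ?thesis by (simp add: cinner_self_eq_0 d_def)
qed

lemma Pp_zero: assumes "Pp x" shows "x = 0"
proof -
  have PL: "Pp ((L ^^ j) x)" for j by (induction j) (auto simp: assms Pp_L)
  have rep: "x = (T ^^ k) ((L ^^ k) x)" for k
  proof (induction k)
    case 0 show ?case by simp
  next
    case (Suc k)
    have "(L ^^ k) x = T ((L ^^ Suc k) x)" using Pp_fix[OF PL[of k]] by simp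
    hence "(T ^^ k) ((L ^^ k) x) = (T ^^ Suc k) ((L ^^ Suc k) x)"
      by (simp add: funpow_Suc_right del: funpow.simps)
    thus ?case using Suc.IH by simp
  qed
  have "x \<in> (\<Inter>k\<in>{1..}. range (T ^^ k))" using rep by (metis INT_I rangeI)
  thus ?thesis using Tan unfolding analytic_op_def by blast
qed

lemma Om_iff: "cmod z < 1 / onorm (moore_penrose T) \<longleftrightarrow> cmod z * \<rho> < 1"
  using rho_pos by (simp add: \<rho>_def[symmetric] less_divide_eq)

lemma main: "cowen_douglas n {z. cmod z < 1 / onorm (moore_penrose T)} (adjoint T)"
proof -
  define \<Omega> where "\<Omega> = {z. cmod z < 1 / onorm (moore_penrose T)}"
  have Om: "z \<in> \<Omega> \<longleftrightarrow> cmod z * \<rho> < 1" for z by (simp add: \<Omega>_def Om_iff)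
  have op: "open \<Omega>"
  proof -
    have "\<Omega> = ball 0 (1 / onorm (moore_penrose T))" by (auto simp: \<Omega>_def ball_def dist_norm)
    thus ?thesis by simp
  qed
  have spec: "\<Omega> \<subseteq> op_spectrum Ts"
  proof
    fix l assume l: "l \<in> \<Omega>"
    have "cmod l * \<rho> < 1" using Om l by blast
    hence "cdim (K l) = n" using dimK by blast
    have "K l \<noteq> {0}"
    proof
      assume "K l = {0}"
      hence "cdim (K l) = 0" by (simp add: cdim_zero)
      thus False using \<open>cdim (K l) = n\<close> npos by simp
    qed
    moreover have "0 \<in> K l" using bcl_zero[OF R_bcl] by (simp add: kernel_def)
    ultimately obtain y where y: "y \<in> K l" "y \<noteq> 0" by blast
    show "l \<in> op_spectrum Ts"
    proof (unfold op_spectrum_def, rule, rule notI)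
      assume "invertible_op (\<lambda>x. Ts x - scaleC l x)"
      then obtain S where S: "\<forall>x. S (Ts x - scaleC l x) = x" by (auto simp: invertible_op_def)
      have "Ts y - scaleC l y = 0" using y(1) by (simp add: kernel_def)
      hence "y = S 0" using S[rule_format, of y] by simp
      also have "\<dots> = 0" using S[rule_format, of 0] by (simp add: bcl_zero[OF Ts_bcl] cv.scale_zero_right)
      finally show False using y(2) by simp
    qed
  qed
  define U where "U = (\<Union>l\<in>\<Omega>. K l)"
  have dense: "closure (cspan U) = UNIV"
  proof -
    define M where "M = closure (cspan U)"
    have clM: "closed M" by (simp add: M_def)
    have subM: "cv.subspace M" unfolding M_def cspan_eq by (intro csubspace_closure cv.subspace_span)
    have UM: "U \<subseteq> M" unfolding M_def cspan_eq using cv.span_superset closure_subset by blast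
    have "x \<in> M" for x
    proof -
      obtain m where m: "m \<in> M" "\<forall>v\<in>M. cinner v (x - m) = 0"
        using projection_exists[OF clM subM, of x] by blast
      have "Pp (x - m)" unfolding Pp_def
      proof (intro allI impI ballI)
        fix \<mu> w assume "cmod \<mu> * \<rho> < 1" "w \<in> K \<mu>"
        hence "w \<in> U" using Om by (auto simp: U_def)
        thus "cinner w (x - m) = 0" using m UM by blast
      qed
      hence "x - m = 0" by (rule Pp_zero)
      thus ?thesis using m by simp
    qed
    thus ?thesis by (auto simp: M_def)
  qed
  show ?thesis
    unfolding cowen_douglas_def \<Omega>_def[symmetric]
  proof (intro conjI ballI)
    show "open \<Omega>" by (rule op)
    show "bounded_clinear Ts" by (rule Ts_bcl)
    show "\<Omega> \<subseteq> op_spectrum Ts" by (rule spec)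
    show "surj (\<lambda>x. Ts x - scaleC l x)" if "l \<in> \<Omega>" for l using surjR Om that by blast
    show "fin_cdim (K l)" if "l \<in> \<Omega>" for l using dimK Om that by blast
    show "cdim (K l) = n" if "l \<in> \<Omega>" for l using dimK Om that by blast
    show "closure (cspan (\<Union>l\<in>\<Omega>. K l)) = UNIV" using dense by (simp only: U_def)
  qed
qed

end

theorem proposition3p11:
  fixes T :: "'a::chilbert_space \<Rightarrow> 'a" and n :: nat
  assumes "n > 0"
    and "bounded_clinear T"
    and "left_invertible T"
    and "analytic_op T"
    and "fredholm T"
    and "fredholm_index T = - int n"
  shows "cowen_douglas n {z. cmod z < 1 / onorm (moore_penrose T)} (adjoint T)"
  using main[OF assms] .

end
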